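(* Let $f_\mathrm{s}=1/T_\mathrm{s}>0$, $b\in\mathbb{N}$, $\bar\kappa>0$, and let $S_{\mathsf{x}}(f)\ge 0$ be a power spectral density supported in $(-f_\mathrm{nyq}/2,f_\mathrm{nyq}/2)$. Consider the problem of maximizing, over nonnegative functions $\bar H:\mathbb{R}\to[0,\infty)$, the objective $$\int_{-f_\mathrm{s}/2}^{f_\mathrm{s}/2}\frac{\sum_{k\in\mathbb{Z}}\bar H(f-kf_\mathrm{s})\,S_{\mathsf{x}}(f-kf_\mathrm{s})}{\sum_{k'\in\mathbb{Z}}\bar H(f-k'f_\mathrm{s})+2^{-2b}}\,\mathrm{d}f$$ subject to $\bar\kappa\,T_\mathrm{s}\int_{-f_\mathrm{s}/2}^{f_\mathrm{s}/2}\sum_{k\in\mathbb{Z}}\bar H(f'-kf_\mathrm{s})\,\mathrm{d}f'=1$. Then the objective is maximized by choosing $\bar H$ such that, for each $\tilde f_0$ with $|\tilde f_0|<f_\mathrm{s}/2$, at most one of the values $\{\bar H(\tilde f_0+kf_\mathrm{s})\}_{k\in\mathbb{Z}}$ is non-zero, and this value corresponds to the $k\in\mathbb{Z}$ with the maximal value among $\{S_{\mathsf{x}}(\tilde f_0+kf_\mathrm{s})\}_{k\in\mathbb{Z}}$; that is, restricting to feasible $\bar H$ with this property does not decrease the achievable objective value.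
   Context: In the paper, $\bar H(f)=|H(f)|^2S_{\mathsf{x}}(f)$ for a pre-sampling filter $H$, and $\bar\kappa=\eta^2\left(1-\frac{2\eta^2}{3\cdot2^{2b}}\right)^{-1}$; the claim concerns only the stated optimization problem. *)

theory Defs
  imports "HOL-Analysis.Analysis"
begin

definition alias_sum :: "real \<Rightarrow> (real \<Rightarrow> real) \<Rightarrow> real \<Rightarrow> real" where
  "alias_sum fs g f = (\<Sum>\<^sub>\<infinity>k\<in>(UNIV::int set). g (f - real_of_int k * fs))"

definition objective :: "real \<Rightarrow> nat \<Rightarrow> (real \<Rightarrow> real) \<Rightarrow> (real \<Rightarrow> real) \<Rightarrow> real" where
  "objective fs b Sx Hb = integral {-fs/2..fs/2}
     (\<lambda>f. alias_sum fs (\<lambda>x. Hb x * Sx x) f / (alias_sum fs Hb f + 1 / 2 ^ (2*b)))"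

definition feasible :: "real \<Rightarrow> real \<Rightarrow> (real \<Rightarrow> real) \<Rightarrow> bool" where
  "feasible fs kappa Hb \<longleftrightarrow>
     (\<forall>f. Hb f \<ge> 0) \<and>
     (\<forall>f. (\<lambda>k::int. Hb (f - real_of_int k * fs)) summable_on UNIV) \<and>
     (alias_sum fs Hb) integrable_on {-fs/2..fs/2} \<and>
     kappa * (1 / fs) * integral {-fs/2..fs/2} (alias_sum fs Hb) = 1"

definition alias_max_selective :: "real \<Rightarrow> (real \<Rightarrow> real) \<Rightarrow> (real \<Rightarrow> real) \<Rightarrow> bool" where
  "alias_max_selective fs Sx Hb \<longleftrightarrow>
     (\<forall>f0. \<bar>f0\<bar> < fs/2 \<longrightarrow>
        (\<forall>k j::int. Hb (f0 + real_of_int k * fs) \<noteq> 0 \<and> Hb (f0 + real_of_int j * fs) \<noteq> 0 \<longrightarrow> k = j) \<and>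
        (\<forall>k::int. Hb (f0 + real_of_int k * fs) \<noteq> 0 \<longrightarrow>
           (\<forall>j::int. Sx (f0 + real_of_int j * fs) \<le> Sx (f0 + real_of_int k * fs))))"

end

theory Submission
  imports Defs
begin

lemma alias_shift:
  "alias_sum fs g (f - of_int m * fs) = alias_sum fs g f"
proof -
  have bij: "bij_betw (\<lambda>k::int. k + m) UNIV UNIV"
    by (rule bij_betwI[where g="\<lambda>k. k - m"]) auto
  have "alias_sum fs g (f - of_int m * fs) =
        (\<Sum>\<^sub>\<infinity>k\<in>(UNIV::int set). (\<lambda>k. g (f - real_of_int k * fs)) (k + m))"
    unfolding alias_sum_def by (rule infsum_cong) (simp add: algebra_simps)
  also have "\<dots> = alias_sum fs g f"
    unfolding alias_sum_def by (rule infsum_reindex_bij_betw[OF bij])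
  finally show ?thesis .
qed

lemma single_sum:
  fixes F :: "int \<Rightarrow> real"
  assumes "\<And>k. k \<noteq> k1 \<Longrightarrow> F k = 0"
  shows "F summable_on UNIV" "infsum F UNIV = F k1"
proof -
  have "F summable_on UNIV \<longleftrightarrow> F summable_on {k1}"
    by (rule summable_on_cong_neutral) (use assms in auto)
  then show "F summable_on UNIV" by simp
  have "infsum F UNIV = infsum F {k1}"
    by (rule infsum_cong_neutral) (use assms in auto)
  then show "infsum F UNIV = F k1" by simp
qed

lemma floor_shift:
  fixes fs f :: real and k :: int
  assumes "fs > 0"
  shows "floor ((f - of_int k * fs + fs/2)/fs) = floor ((f + fs/2)/fs) - k"
proof -
  have "(f - of_int k * fs + fs/2)/fs = (f + fs/2)/fs - of_int k"
    using assms by (simp add: field_simps)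
  then show ?thesis by simp
qed

lemma floor_bounds:
  fixes fs x :: real
  assumes "fs > 0"
  shows "-fs/2 \<le> x - of_int (floor ((x + fs/2)/fs)) * fs"
    and "x - of_int (floor ((x + fs/2)/fs)) * fs < fs/2"
proof -
  define t where "t = (x + fs/2)/fs"
  have tf: "t * fs = x + fs/2" using assms unfolding t_def by simp
  have a: "of_int (floor t) \<le> t" and b: "t < of_int (floor t) + 1" by linarith+
  from a have "of_int (floor t) * fs \<le> t * fs"
    using assms by (simp add: mult_right_mono)
  then show "-fs/2 \<le> x - of_int (floor ((x + fs/2)/fs)) * fs" using tf unfolding t_def by simp
  from b have "t * fs < (of_int (floor t) + 1) * fs"
    using assms by (simp add: mult_strict_right_mono)
  then show "x - of_int (floor ((x + fs/2)/fs)) * fs < fs/2" using tf unfolding t_def by (simp add: algebra_simps)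
qed

lemma floor_id:
  fixes fs f0 :: real and k :: int
  assumes "fs > 0" "-fs/2 \<le> f0" "f0 < fs/2"
  shows "floor ((f0 + of_int k * fs + fs/2)/fs) = k"
proof -
  have "(f0 + of_int k * fs + fs/2)/fs = (f0 + fs/2)/fs + of_int k"
    using assms by (simp add: field_simps)
  moreover have "floor ((f0 + fs/2)/fs) = 0"
    using assms by (simp add: floor_eq_iff field_simps)
  ultimately show ?thesis by simp
qed

theorem lemma2:
  fixes fs fnyq kappa :: real and b :: nat and Sx :: "real \<Rightarrow> real"
  assumes fs_pos: "fs > 0"
    and kappa_pos: "kappa > 0"
    and fnyq_pos: "fnyq > 0"
    and Sx_nonneg: "\<And>f. Sx f \<ge> 0"
    and Sx_integrable: "Sx integrable_on UNIV"
    and Sx_support: "\<And>f. \<bar>f\<bar> \<ge> fnyq / 2 \<Longrightarrow> Sx f = 0"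
    and H_feas: "feasible fs kappa H"
  shows "\<exists>H'. feasible fs kappa H' \<and> alias_max_selective fs Sx H' \<and>
              objective fs b Sx H \<le> objective fs b Sx H'"
proof -
  define c :: real where "c = 1 / 2 ^ (2*b)"
  have c_pos: "c > 0" unfolding c_def by simp
  define A where "A = alias_sum fs H"
  define N :: int where "N = ceiling (fnyq/fs) + 1"
  define F0 where "F0 = {-N..N}"
  define Mx where "Mx y = Max ((\<lambda>j. Sx (of_int j * fs + y)) ` F0)" for y
  define nn where "nn x = floor ((x + fs/2)/fs)" for x
  define rr where "rr x = x - of_int (nn x) * fs" for x
  define ks where "ks y = (SOME k. k \<in> F0 \<and> (\<forall>j. Sx (of_int j * fs + y) \<le> Sx (of_int k * fs + y)))" for y
  define H' where "H' x = (if nn x = ks (rr x) then A (rr x) else 0)" for x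
  have Hnn: "\<And>f. H f \<ge> 0" and Hsum: "\<And>f. (\<lambda>k::int. H (f - real_of_int k * fs)) summable_on UNIV"
    and Aint: "A integrable_on {-fs/2..fs/2}"
    and Acon: "kappa * (1 / fs) * integral {-fs/2..fs/2} A = 1"
    using H_feas unfolding feasible_def A_def by auto
  have N_pos: "N \<ge> 1"
  proof -
    have "fnyq / fs > 0" using fnyq_pos fs_pos by simp
    hence "ceiling (fnyq/fs) \<ge> 0" by linarith
    thus ?thesis unfolding N_def by simp
  qed
  have finF0: "finite F0" and neF0: "F0 \<noteq> {}"
    unfolding F0_def using N_pos by auto
  have N_ge: "of_int N * fs \<ge> fnyq + fs"
  proof -
    have "of_int (ceiling (fnyq/fs)) \<ge> fnyq/fs" by simp
    hence "of_int (ceiling (fnyq/fs)) * fs \<ge> fnyq / fs * fs"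
      by (rule mult_right_mono) (use fs_pos in simp)
    hence "of_int (ceiling (fnyq/fs)) * fs \<ge> fnyq" using fs_pos by simp
    thus ?thesis unfolding N_def by (simp add: algebra_simps)
  qed
  have out0: "Sx (of_int j * fs + y) = 0" if "\<bar>y\<bar> \<le> fs/2" "j \<notin> F0" for j y
  proof -
    have "\<bar>j\<bar> \<ge> N + 1" using that unfolding F0_def by auto
    hence "of_int \<bar>j\<bar> \<ge> (of_int N + 1 :: real)" by linarith
    hence "of_int \<bar>j\<bar> * fs \<ge> (of_int N + 1) * fs" using fs_pos by (simp add: mult_right_mono)
    hence "\<bar>of_int j * fs\<bar> \<ge> fnyq + 2 * fs" using N_ge fs_pos
      by (simp add: abs_mult algebra_simps)
    hence "\<bar>of_int j * fs + y\<bar> \<ge> fnyq / 2" using that fnyq_pos fs_pos by linarith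
    thus ?thesis by (rule Sx_support)
  qed
  have Mx_ge: "Sx (of_int j * fs + y) \<le> Mx y" if "\<bar>y\<bar> \<le> fs/2" for j y
  proof (cases "j \<in> F0")
    case True thus ?thesis unfolding Mx_def using finF0 by (intro Max_ge) auto
  next
    case False
    obtain j0 where "j0 \<in> F0" using neF0 by auto
    hence "Sx (of_int j0 * fs + y) \<le> Mx y" unfolding Mx_def using finF0 by (intro Max_ge) auto
    thus ?thesis using out0[OF that False] Sx_nonneg[of "of_int j0 * fs + y"] by linarith
  qed
  have Mx_nn: "Mx y \<ge> 0" if "\<bar>y\<bar> \<le> fs/2" for y
    using Mx_ge[OF that, of 0] Sx_nonneg[of "of_int 0 * fs + y"] by linarith
  have Mx_in: "\<exists>k\<in>F0. Sx (of_int k * fs + y) = Mx y" for y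
  proof -
    have "Mx y \<in> (\<lambda>j. Sx (of_int j * fs + y)) ` F0" unfolding Mx_def
      using finF0 neF0 by (intro Max_in) auto
    thus ?thesis by auto
  qed
  have ks_prop: "ks y \<in> F0 \<and> (\<forall>j. Sx (of_int j * fs + y) \<le> Sx (of_int (ks y) * fs + y))"
    if "\<bar>y\<bar> \<le> fs/2" for y
  proof -
    obtain k where k: "k \<in> F0" "Sx (of_int k * fs + y) = Mx y" using Mx_in by blast
    have "k \<in> F0 \<and> (\<forall>j. Sx (of_int j * fs + y) \<le> Sx (of_int k * fs + y))"
      using k Mx_ge[OF that] by auto
    thus ?thesis unfolding ks_def by (rule someI)
  qed
  have ks_Mx: "Sx (of_int (ks y) * fs + y) = Mx y" if "\<bar>y\<bar> \<le> fs/2" for y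
    using ks_prop[OF that] Mx_ge[OF that] Mx_in[of y] by (metis order_antisym)
  have rr_b: "\<bar>rr x\<bar> \<le> fs/2" for x
    using floor_bounds[OF fs_pos, of x] unfolding rr_def nn_def by (simp only: abs_le_iff) linarith
  have nn_shift: "nn (f - of_int k * fs) = nn f - k" for f k
    unfolding nn_def by (rule floor_shift[OF fs_pos])
  have rr_shift: "rr (f - of_int k * fs) = rr f" for f k
    unfolding rr_def nn_shift by (simp add: algebra_simps)
  have A_nn: "A x \<ge> 0" for x
    unfolding A_def alias_sum_def by (rule infsum_nonneg) (use Hnn in auto)
  have A_rr: "A (rr f) = A f" for f
    unfolding rr_def A_def by (rule alias_shift)
  have H'_shift: "H' (f - of_int k * fs) = (if k = nn f - ks (rr f) then A f else 0)" for f k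
    unfolding H'_def nn_shift rr_shift A_rr by auto
  have H'_nn: "H' x \<ge> 0" for x unfolding H'_def using A_nn by auto
  have H'_sum: "(\<lambda>k::int. H' (f - real_of_int k * fs)) summable_on UNIV"
    and H'_as: "alias_sum fs H' f = A f" for f
    using single_sum[of "nn f - ks (rr f)" "\<lambda>k. H' (f - real_of_int k * fs)"]
    unfolding alias_sum_def H'_shift by auto
  have H'_asf: "alias_sum fs H' = A" using H'_as by auto
  have num': "alias_sum fs (\<lambda>x. H' x * Sx x) f = A f * Mx (rr f)" for f
  proof -
    let ?k = "nn f - ks (rr f)"
    have "alias_sum fs (\<lambda>x. H' x * Sx x) f = H' (f - of_int ?k * fs) * Sx (f - of_int ?k * fs)"
      using single_sum[of ?k "\<lambda>k. H' (f - real_of_int k * fs) * Sx (f - real_of_int k * fs)"]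
      unfolding alias_sum_def H'_shift by auto
    moreover have "H' (f - of_int ?k * fs) = A f" using H'_shift[of f ?k] by simp
    moreover have "f - of_int ?k * fs = of_int (ks (rr f)) * fs + rr f"
      unfolding rr_def by (simp add: algebra_simps)
    ultimately show ?thesis using ks_Mx[OF rr_b, of f] by simp
  qed
  have feas': "feasible fs kappa H'"
    unfolding feasible_def H'_asf using H'_nn H'_sum Aint Acon by auto
  have sel: "alias_max_selective fs Sx H'"
    unfolding alias_max_selective_def
  proof (intro allI impI)
    fix f0 assume f0: "\<bar>f0\<bar> < fs/2"
    have nnk: "nn (f0 + of_int k * fs) = k" for k
      unfolding nn_def using floor_id[OF fs_pos, of f0 k] f0 by auto
    have rrk: "rr (f0 + of_int k * fs) = f0" for k
      unfolding rr_def nnk by simp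
    have nz: "H' (f0 + of_int k * fs) \<noteq> 0 \<Longrightarrow> k = ks f0" for k
      unfolding H'_def nnk rrk by (auto split: if_splits)
    have P1: "\<forall>k j. H' (f0 + real_of_int k * fs) \<noteq> 0 \<and> H' (f0 + real_of_int j * fs) \<noteq> 0 \<longrightarrow> k = j"
      using nz by auto
    have P2: "\<forall>k. H' (f0 + real_of_int k * fs) \<noteq> 0 \<longrightarrow>
           (\<forall>j. Sx (f0 + real_of_int j * fs) \<le> Sx (f0 + real_of_int k * fs))"
      using nz ks_prop[of f0] f0 by (auto simp: add.commute)
    from P1 P2 show "(\<forall>k j. H' (f0 + real_of_int k * fs) \<noteq> 0 \<and> H' (f0 + real_of_int j * fs) \<noteq> 0 \<longrightarrow> k = j) \<and>
        (\<forall>k. H' (f0 + real_of_int k * fs) \<noteq> 0 \<longrightarrow>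
           (\<forall>j. Sx (f0 + real_of_int j * fs) \<le> Sx (f0 + real_of_int k * fs)))" by blast
  qed
  define I where "I = {-fs/2..fs/2::real}"
  define G where "G f = A f * Mx f / (A f + c)" for f
  define g where "g f = alias_sum fs (\<lambda>x. H x * Sx x) f / (A f + c)" for f
  have I_abs: "\<bar>x\<bar> \<le> fs/2" if "x \<in> I" for x using that unfolding I_def by auto
  have objH: "objective fs b Sx H = integral I g"
    unfolding objective_def g_def I_def A_def c_def ..
  have rr_id: "rr x = x" if "-fs/2 \<le> x" "x < fs/2" for x
    using floor_id[OF fs_pos that, of 0] unfolding rr_def nn_def by simp
  have objH': "objective fs b Sx H' = integral I G"
  proof -
    have "objective fs b Sx H' = integral I (\<lambda>f. A f * Mx (rr f) / (A f + c))"
      unfolding objective_def I_def num' H'_as c_def ..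
    also have "\<dots> = integral I G"
      by (rule integral_spike[of "{fs/2}"]) (auto simp: G_def I_def rr_id)
    finally show ?thesis .
  qed
  have mA: "A \<in> borel_measurable (lebesgue_on I)"
    using integrable_imp_measurable[OF Aint] unfolding I_def .
  have shint: "(\<lambda>y. Sx (of_int j * fs + y)) integrable_on I" for j
  proof -
    have "Sx integrable_on {-fs/2 + of_int j * fs..fs/2 + of_int j * fs}"
      by (rule integrable_on_subinterval[OF Sx_integrable]) auto
    hence "(Sx \<circ> (+) (of_int j * fs)) integrable_on {-fs/2..fs/2}"
      using integrable_on_shift_Icc_real by blast
    thus ?thesis unfolding I_def o_def .
  qed
  have mM: "Mx \<in> borel_measurable (lebesgue_on I)"
    unfolding Mx_def by (rule borel_measurable_Max[OF finF0]) (rule integrable_imp_measurable[OF shint])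
  have mG: "G \<in> borel_measurable (lebesgue_on I)"
    unfolding G_def by (intro borel_measurable_divide borel_measurable_times borel_measurable_add borel_measurable_const mA mM)
  have G_nn: "G x \<ge> 0" if "x \<in> I" for x
    unfolding G_def using A_nn[of x] Mx_nn[OF I_abs[OF that]] c_pos by simp
  have G_le: "G x \<le> (\<Sum>j\<in>F0. Sx (of_int j * fs + x))" if "x \<in> I" for x
  proof -
    have Mx0: "Mx x \<ge> 0" using Mx_nn[OF I_abs[OF that]] .
    have "A x * Mx x \<le> Mx x * (A x + c)" using Mx0 c_pos by (simp add: algebra_simps)
    hence "G x \<le> Mx x" unfolding G_def using A_nn[of x] c_pos by (simp add: divide_le_eq)
    also obtain k where "k \<in> F0" "Sx (of_int k * fs + x) = Mx x" using Mx_in by blast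
    hence "Mx x \<le> (\<Sum>j\<in>F0. Sx (of_int j * fs + x))"
      using finF0 Sx_nonneg by (metis member_le_sum)
    finally show ?thesis .
  qed
  have Gint: "G integrable_on I"
  proof (rule measurable_bounded_by_integrable_imp_integrable_real[OF mG])
    show "(\<lambda>x. \<Sum>j\<in>F0. Sx (of_int j * fs + x)) integrable_on I"
      by (rule integrable_sum[OF finF0]) (rule shint)
    show "\<bar>G x\<bar> \<le> (\<Sum>j\<in>F0. Sx (of_int j * fs + x))" if "x \<in> I" for x
      using G_nn[OF that] G_le[OF that] by simp
    show "I \<in> sets lebesgue" unfolding I_def by simp
  qed
  have g_le: "g f \<le> G f" if "f \<in> I" for f
  proof -
    have sm: "(\<lambda>k::int. H (f - of_int k * fs) * Mx f) summable_on UNIV"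
      by (rule summable_on_cmult_left[OF Hsum])
    have le: "H (f - of_int k * fs) * Sx (f - of_int k * fs) \<le> H (f - of_int k * fs) * Mx f" for k
    proof -
      have "Sx (of_int (-k) * fs + f) \<le> Mx f" by (rule Mx_ge[OF I_abs[OF that]])
      hence "Sx (f - of_int k * fs) \<le> Mx f" by (simp add: algebra_simps)
      thus ?thesis using Hnn by (simp add: mult_left_mono)
    qed
    have sm2: "(\<lambda>k::int. H (f - of_int k * fs) * Sx (f - of_int k * fs)) summable_on UNIV"
      by (rule summable_on_comparison_test[OF sm]) (use le Hnn Sx_nonneg in auto)
    have "alias_sum fs (\<lambda>x. H x * Sx x) f \<le> (\<Sum>\<^sub>\<infinity>k\<in>(UNIV::int set). H (f - of_int k * fs) * Mx f)"
      unfolding alias_sum_def by (rule infsum_mono[OF sm2 sm le])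
    also have "\<dots> = A f * Mx f"
      unfolding A_def alias_sum_def by (rule infsum_cmult_left) (use Hsum in auto)
    finally have "alias_sum fs (\<lambda>x. H x * Sx x) f \<le> A f * Mx f" .
    thus ?thesis unfolding g_def G_def using A_nn[of f] c_pos
      by (intro divide_right_mono) auto
  qed
  have "objective fs b Sx H \<le> objective fs b Sx H'"
  proof (cases "g integrable_on I")
    case True
    thus ?thesis unfolding objH objH' using Gint g_le by (intro integral_le) auto
  next
    case False
    thus ?thesis unfolding objH objH' using Gint G_nn
      by (simp add: not_integrable_integral integral_nonneg)
  qed
  thus ?thesis using feas' sel by blast
qed

end
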